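(* Let $\mathcal{V}$ be a finite set of nodes, $\mathcal{F}$ a finite set of flows, each flow $f$ with rate $\lambda_f>0$ and path node set $\mathcal{V}_f\subseteq\mathcal{V}$, and each node $v$ with capacity $c_v>0$. For $\mathcal{U}\subseteq\mathcal{V}$ let $R_3(\mathcal{U})$ be the optimal value of $$\max \sum_{f\in\mathcal{F}}\sum_{v\in\mathcal{V}_f\cap\mathcal{U}}\lambda_f^v$$ over nonnegative $(\lambda_f^v)_{f\in\mathcal{F},v\in\mathcal{V}}$ subject to $\sum_{f\in\mathcal{F}}\lambda_f^v\le c_v$ for all $v\in\mathcal{U}$, $\lambda_f^v=0$ for all $f$ and all $v\notin\mathcal{U}$, and $\sum_{v\in\mathcal{U}}\lambda_f^v\le\lambda_f$ for all $f\in\mathcal{F}$. Then the set function $R_3:2^{\mathcal{V}}\to\mathbb{R}$ is monotonically nondecreasing and submodular.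
   Context: A set function $H:2^{\mathcal{V}}\to\mathbb{R}$ is submodular if $H(\mathcal{V}_1\cup\{v\})-H(\mathcal{V}_1)\ge H(\mathcal{V}_2\cup\{v\})-H(\mathcal{V}_2)$ for all $\mathcal{V}_1\subseteq\mathcal{V}_2\subseteq\mathcal{V}$ and $v\in\mathcal{V}\setminus\mathcal{V}_2$. *)

theory Defs
  imports Complex_Main
begin

definition feasible3 ::
  "'v set \<Rightarrow> 'f set \<Rightarrow> ('f \<Rightarrow> real) \<Rightarrow> ('v \<Rightarrow> real) \<Rightarrow> 'v set \<Rightarrow> ('f \<Rightarrow> 'v \<Rightarrow> real) \<Rightarrow> bool"
  where "feasible3 V F rate cap U x \<longleftrightarrow>
     (\<forall>f\<in>F. \<forall>v\<in>V. 0 \<le> x f v) \<and>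
     (\<forall>v\<in>U. (\<Sum>f\<in>F. x f v) \<le> cap v) \<and>
     (\<forall>f\<in>F. \<forall>v\<in>V - U. x f v = 0) \<and>
     (\<forall>f\<in>F. (\<Sum>v\<in>U. x f v) \<le> rate f)"

definition objective3 :: "'f set \<Rightarrow> ('f \<Rightarrow> 'v set) \<Rightarrow> 'v set \<Rightarrow> ('f \<Rightarrow> 'v \<Rightarrow> real) \<Rightarrow> real"
  where "objective3 F path U x = (\<Sum>f\<in>F. \<Sum>v\<in>path f \<inter> U. x f v)"

definition R3 ::
  "'v set \<Rightarrow> 'f set \<Rightarrow> ('f \<Rightarrow> real) \<Rightarrow> ('f \<Rightarrow> 'v set) \<Rightarrow> ('v \<Rightarrow> real) \<Rightarrow> 'v set \<Rightarrow> real"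
  where "R3 V F rate path cap U =
     Sup {objective3 F path U x | x. feasible3 V F rate cap U x}"

definition submodular_on :: "'a set \<Rightarrow> ('a set \<Rightarrow> real) \<Rightarrow> bool"
  where "submodular_on V H \<longleftrightarrow>
     (\<forall>V1 V2 v. V1 \<subseteq> V2 \<and> V2 \<subseteq> V \<and> v \<in> V - V2 \<longrightarrow>
        H (V1 \<union> {v}) - H V1 \<ge> H (V2 \<union> {v}) - H V2)"

definition monotone_nondecr_on :: "'a set \<Rightarrow> ('a set \<Rightarrow> real) \<Rightarrow> bool"
  where "monotone_nondecr_on V H \<longleftrightarrow> (\<forall>A B. A \<subseteq> B \<and> B \<subseteq> V \<longrightarrow> H A \<le> H B)"

end

theory Submission imports Defs "HOL-Analysis.Analysis" begin

definition hcov :: "'f set \<Rightarrow> ('f \<Rightarrow> real) \<Rightarrow> ('f \<Rightarrow> 'v set) \<Rightarrow> 'v set \<Rightarrow> real" where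
 "hcov F rate pth Y = (\<Sum>f\<in>F. if pth f \<inter> Y = {} then 0 else rate f)"

definition KK :: "'f set \<Rightarrow> ('f \<Rightarrow> real) \<Rightarrow> ('f \<Rightarrow> 'v set) \<Rightarrow> ('v \<Rightarrow> real) \<Rightarrow> 'v set \<Rightarrow> ('f \<Rightarrow> 'v \<Rightarrow> real) set" where
 "KK F rate pth cap U = {x. (\<forall>f v. x f v \<in> (if f \<in> F \<and> v \<in> pth f \<inter> U then {0..rate f} else {0}))
     \<and> (\<forall>v\<in>U. (\<Sum>f\<in>F. x f v) \<le> cap v) \<and> (\<forall>f\<in>F. (\<Sum>v\<in>U. x f v) \<le> rate f)}"

lemma proj_cont: "continuous_on UNIV (\<lambda>x::'f \<Rightarrow> 'v \<Rightarrow> real. x f v)"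
  using continuous_on_product_then_coordinatewise[OF continuous_on_product_coordinates[of f], of v] by simp

lemma KK_compact:
  fixes F :: "'f set" and U :: "'v set"
  shows "compact (KK F rate pth cap U)"
proof -
  define B where "B f v = (if f \<in> F \<and> v \<in> pth f \<inter> U then {0..rate f} else {0::real})" for f v
  have c1: "compact (PiE UNIV (\<lambda>f. PiE UNIV (B f)))"
  proof -
    have "compact (PiE UNIV (B f))" for f
    proof -
      have "compactin (product_topology (\<lambda>_. euclidean) UNIV) (PiE UNIV (B f))"
        by (subst compactin_PiE) (auto simp: B_def)
      then show ?thesis by (simp add: euclidean_product_topology)
    qed
    then have "compactin (product_topology (\<lambda>_. euclidean) UNIV) (PiE UNIV (\<lambda>f. PiE UNIV (B f)))"
      by (subst compactin_PiE) auto
    then show ?thesis by (simp add: euclidean_product_topology)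
  qed
  have cs1: "continuous_on UNIV (\<lambda>x::'f\<Rightarrow>'v\<Rightarrow>real. \<Sum>f\<in>F. x f v)" for v
    by (rule continuous_on_sum) (rule proj_cont)
  have cs2: "continuous_on UNIV (\<lambda>x::'f\<Rightarrow>'v\<Rightarrow>real. \<Sum>v\<in>U. x f v)" for f
    by (rule continuous_on_sum) (rule proj_cont)
  have c2: "closed {x::'f\<Rightarrow>'v\<Rightarrow>real. \<forall>v. v \<in> U \<longrightarrow> (\<Sum>f\<in>F. x f v) \<le> cap v}"
    by (intro closed_Collect_all closed_Collect_imp closed_Collect_le open_Collect_const cs1 continuous_on_const)
  have c3: "closed {x::'f\<Rightarrow>'v\<Rightarrow>real. \<forall>f. f \<in> F \<longrightarrow> (\<Sum>v\<in>U. x f v) \<le> rate f}"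
    by (intro closed_Collect_all closed_Collect_imp closed_Collect_le open_Collect_const cs2 continuous_on_const)
  have memP: "x \<in> PiE UNIV (\<lambda>f. PiE UNIV (B f)) \<longleftrightarrow> (\<forall>f v. x f v \<in> B f v)" for x :: "'f\<Rightarrow>'v\<Rightarrow>real"
    by (simp add: PiE_UNIV_domain Pi_iff)
  have "KK F rate pth cap U = PiE UNIV (\<lambda>f. PiE UNIV (B f)) \<inter> ({x::'f\<Rightarrow>'v\<Rightarrow>real. \<forall>v. v \<in> U \<longrightarrow> (\<Sum>f\<in>F. x f v) \<le> cap v} \<inter> {x::'f\<Rightarrow>'v\<Rightarrow>real. \<forall>f. f \<in> F \<longrightarrow> (\<Sum>v\<in>U. x f v) \<le> rate f})"
    unfolding set_eq_iff Int_iff memP unfolding KK_def B_def mem_Collect_eq Ball_def by (intro allI) (rule refl)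
  then show ?thesis using compact_Int_closed[OF c1 closed_Int[OF c2 c3]] by simp
qed

lemma sum_ind1: "finite A \<Longrightarrow> a \<in> A \<Longrightarrow> (\<Sum>i\<in>A. if i = a \<and> P then (1::real) else 0) = (if P then 1 else 0)"
  by (cases P) auto

lemma sum_ind2: "finite A \<Longrightarrow> a \<in> A \<Longrightarrow> (\<Sum>i\<in>A. if P \<and> i = a then (1::real) else 0) = (if P then 1 else 0)"
  by (cases P) auto

lemma exists_cut:
  fixes F :: "'f set" and U :: "'v set" and rate :: "'f \<Rightarrow> real" and cap :: "'v \<Rightarrow> real"
  assumes finF: "finite F" and finU: "finite U"
    and rpos: "\<forall>f\<in>F. rate f > 0" and cpos: "\<forall>v\<in>U. cap v > 0"
  shows "\<exists>x\<in>KK F rate pth cap U. \<exists>Y\<subseteq>U. hcov F rate pth Y + sum cap (U - Y) \<le> (\<Sum>f\<in>F. \<Sum>v\<in>U. x f v)"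
proof -
  let ?K = "KK F rate pth cap U"
  define obj where "obj x = (\<Sum>f\<in>F. \<Sum>v\<in>U. x f v)" for x :: "'f\<Rightarrow>'v\<Rightarrow>real"
  have K0: "(\<lambda>_ _. 0) \<in> ?K" using rpos cpos by (auto simp: KK_def less_imp_le)
  have pc: "continuous_on ?K (\<lambda>x. x f v)" for f v by (rule continuous_on_subset[OF proj_cont]) simp
  have objeq: "obj = (\<lambda>x. \<Sum>f\<in>F. \<Sum>v\<in>U. x f v)" by (rule ext) (simp add: obj_def)
  have cont: "continuous_on ?K obj" unfolding objeq by (intro continuous_on_sum pc)
  have Kne: "?K \<noteq> {}" using K0 by blast
  obtain x where xK: "x \<in> ?K" and xmax: "\<forall>y\<in>?K. obj y \<le> obj x"
    using continuous_attains_sup[OF KK_compact Kne cont] by (elim bexE)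
  note xK' = xK[unfolded KK_def mem_Collect_eq]
  have xent: "x f v \<in> (if f \<in> F \<and> v \<in> pth f \<inter> U then {0..rate f} else {0})" for f v
    using conjunct1[OF xK'] by blast
  have xcap: "\<forall>v\<in>U. (\<Sum>f\<in>F. x f v) \<le> cap v" using conjunct1[OF conjunct2[OF xK']] .
  have xrate: "\<forall>f\<in>F. (\<Sum>v\<in>U. x f v) \<le> rate f" using conjunct2[OF conjunct2[OF xK']] .
  have xnn: "x f v \<ge> 0" for f v using xent[of f v] by (auto split: if_splits)
  have xsupp: "x f v \<noteq> 0 \<Longrightarrow> f \<in> F \<and> v \<in> pth f \<and> v \<in> U" for f v using xent[of f v] by (auto split: if_splits)
  define slack where "slack f \<longleftrightarrow> (\<Sum>v\<in>U. x f v) < rate f" for f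
  define goodD where "goodD f D f0 \<longleftrightarrow> f0 \<in> F \<and> slack f0 \<and>
      (\<forall>h w. D h w \<noteq> 0 \<longrightarrow> h \<in> F \<and> w \<in> pth h \<and> w \<in> U) \<and> (\<forall>h w. D h w < 0 \<longrightarrow> x h w > 0) \<and>
      (\<forall>w\<in>U. (\<Sum>h\<in>F. D h w) = 0) \<and>
      (\<forall>h\<in>F. (\<Sum>w\<in>U. D h w) = (if h = f0 then 1 else 0) - (if h = f then 1 else 0))" for f and D :: "'f \<Rightarrow> 'v \<Rightarrow> real" and f0
  define good where "good f \<longleftrightarrow> f \<in> F \<and> (\<exists>D f0. goodD f D f0)" for f
  have good_base: "good f" if "f \<in> F" "slack f" for f
  proof -
    have "goodD f (\<lambda>_ _. 0) f" unfolding goodD_def using that by simp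
    thus ?thesis unfolding good_def using that by blast
  qed
  have good_step: "good g" if gf: "good f" and u: "u \<in> pth f" "u \<in> U" and g: "g \<in> F" "x g u > 0" for f g u
  proof -
    obtain D :: "'f \<Rightarrow> 'v \<Rightarrow> real" and f0 where fF: "f\<in>F" and f0: "f0 \<in> F" "slack f0"
      and Ds: "\<forall>g w. D g w \<noteq> 0 \<longrightarrow> g \<in> F \<and> w \<in> pth g \<and> w \<in> U"
      and Dn: "\<forall>g w. D g w < 0 \<longrightarrow> x g w > 0" and Dc: "\<forall>w\<in>U. (\<Sum>g\<in>F. D g w) = 0"
      and Dr: "\<forall>g'\<in>F. (\<Sum>w\<in>U. D g' w) = (if g' = f0 then 1 else 0) - (if g' = f then 1 else 0)"
      using gf unfolding good_def goodD_def by (elim conjE exE) (rule that; assumption)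
    have gu: "u \<in> pth g" using xsupp[of g u] g by auto
    define D' where "D' g' w = D g' w + (if g' = f \<and> w = u then 1 else 0) - (if g' = g \<and> w = u then 1 else 0)" for g' w
    have s1: "\<forall>g' w. D' g' w \<noteq> 0 \<longrightarrow> g' \<in> F \<and> w \<in> pth g' \<and> w \<in> U"
      using Ds fF u g gu by (auto simp: D'_def split: if_splits)
    have s2: "\<forall>g' w. D' g' w < 0 \<longrightarrow> x g' w > 0"
      using Dn g by (auto simp: D'_def split: if_splits)
    have s3: "\<forall>w\<in>U. (\<Sum>g'\<in>F. D' g' w) = 0"
      using Dc by (simp add: D'_def sum.distrib sum_subtractf sum_ind1 finF fF g)
    have s4: "\<forall>g'\<in>F. (\<Sum>w\<in>U. D' g' w) = (if g' = f0 then 1 else 0) - (if g' = g then 1 else 0)"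
      using Dr by (simp add: D'_def sum.distrib sum_subtractf sum_ind2 finU u)
    have "goodD g D' f0" unfolding goodD_def by (intro conjI f0 s1 s2 s3 s4)
    thus ?thesis unfolding good_def using g by blast
  qed
  have sat: "(\<Sum>g\<in>F. x g u) = cap u" if gf: "good f" and u: "u \<in> pth f" "u \<in> U" for f u
  proof (rule ccontr)
    assume ne: "(\<Sum>g\<in>F. x g u) \<noteq> cap u"
    hence lt: "(\<Sum>g\<in>F. x g u) < cap u" using xcap u by force
    obtain D :: "'f \<Rightarrow> 'v \<Rightarrow> real" and f0 where fF: "f\<in>F" and f0: "f0 \<in> F" "slack f0"
      and Ds: "\<forall>g w. D g w \<noteq> 0 \<longrightarrow> g \<in> F \<and> w \<in> pth g \<and> w \<in> U"
      and Dn: "\<forall>g w. D g w < 0 \<longrightarrow> x g w > 0" and Dc: "\<forall>w\<in>U. (\<Sum>g\<in>F. D g w) = 0"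
      and Dr: "\<forall>g'\<in>F. (\<Sum>w\<in>U. D g' w) = (if g' = f0 then 1 else 0) - (if g' = f then 1 else 0)"
      using gf unfolding good_def goodD_def by (elim conjE exE) (rule that; assumption)
    define D' where "D' g' w = D g' w + (if g' = f \<and> w = u then 1 else 0)" for g' w
    have s1: "\<forall>g' w. D' g' w \<noteq> 0 \<longrightarrow> g' \<in> F \<and> w \<in> pth g' \<and> w \<in> U"
      using Ds fF u by (auto simp: D'_def split: if_splits)
    have s2: "\<forall>g' w. D' g' w < 0 \<longrightarrow> x g' w > 0"
      using Dn by (auto simp: D'_def split: if_splits)
    have s3: "\<forall>w\<in>U. (\<Sum>g'\<in>F. D' g' w) = (if w = u then 1 else 0)"
      using Dc by (simp add: D'_def sum.distrib sum_ind1 finF fF)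
    have s4: "\<forall>g'\<in>F. (\<Sum>w\<in>U. D' g' w) = (if g' = f0 then 1 else 0)"
      using Dr by (simp add: D'_def sum.distrib sum_ind2 finU u)
    define N where "N = {p \<in> F \<times> U. D' (fst p) (snd p) < 0}"
    have finN: "finite N" unfolding N_def using finF finU by auto
    define E where "E = insert (cap u - (\<Sum>g\<in>F. x g u)) (insert (rate f0 - (\<Sum>w\<in>U. x f0 w))
        ((\<lambda>p. x (fst p) (snd p) / (- D' (fst p) (snd p))) ` N))"
    define eps where "eps = Min E"
    have finE: "finite E" "E \<noteq> {}" unfolding E_def using finN by auto
    have Epos: "\<forall>e\<in>E. e > 0"
      unfolding E_def using lt f0(2) s2 by (auto simp: slack_def N_def intro!: divide_pos_neg)
    have epos: "eps > 0" unfolding eps_def using finE Epos by (simp add: Min_gr_iff)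
    have ele: "eps \<le> e" if "e \<in> E" for e unfolding eps_def using finE that by simp
    define y where "y g' w = x g' w + eps * D' g' w" for g' w
    have ynn: "y g' w \<ge> 0" for g' w
    proof (cases "D' g' w < 0")
      case True
      moreover have "D' g' w \<noteq> 0" using True by simp
      hence "g' \<in> F \<and> w \<in> U" using s1 by blast
      ultimately have "(g', w) \<in> N" by (simp add: N_def)
      hence "x g' w / (- D' g' w) \<in> E" unfolding E_def by (auto intro!: image_eqI[where x="(g', w)"])
      hence le1: "eps \<le> x g' w / (- D' g' w)" by (rule ele)
      have pos: "0 < - D' g' w" using True by simp
      have "eps * (- D' g' w) \<le> x g' w" using le1 pos_le_divide_eq[OF pos] by blast
      thus ?thesis by (simp add: y_def)
    next
      case False
      thus ?thesis using xnn[of g' w] epos by (simp add: y_def)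
    qed
    have yrow: "(\<Sum>w\<in>U. y g' w) \<le> rate g'" if "g' \<in> F" for g'
    proof -
      have "(\<Sum>w\<in>U. y g' w) = (\<Sum>w\<in>U. x g' w) + eps * (if g' = f0 then 1 else 0)"
        using s4 that by (simp add: y_def sum.distrib sum_distrib_left[symmetric])
      moreover have "eps \<le> rate f0 - (\<Sum>w\<in>U. x f0 w)" using ele unfolding E_def by auto
      ultimately show ?thesis using xrate that by auto
    qed
    have ycol: "(\<Sum>g'\<in>F. y g' w) \<le> cap w" if "w \<in> U" for w
    proof -
      have "(\<Sum>g'\<in>F. y g' w) = (\<Sum>g'\<in>F. x g' w) + eps * (if w = u then 1 else 0)"
        using s3 that by (simp add: y_def sum.distrib sum_distrib_left[symmetric])
      moreover have "eps \<le> cap u - (\<Sum>g\<in>F. x g u)" using ele unfolding E_def by auto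
      ultimately show ?thesis using xcap that by auto
    qed
    have yent: "y g' w \<in> (if g' \<in> F \<and> w \<in> pth g' \<inter> U then {0..rate g'} else {0})" for g' w
    proof (cases "g' \<in> F \<and> w \<in> pth g' \<inter> U")
      case True
      have "y g' w \<le> (\<Sum>w\<in>U. y g' w)"
        using True finU ynn by (intro member_le_sum) auto
      thus ?thesis using True ynn[of g' w] yrow[of g'] by auto
    next
      case False
      hence "D' g' w = 0" "x g' w = 0" using s1 xsupp by blast+
      thus ?thesis using False by (auto simp: y_def)
    qed
    have yK: "y \<in> ?K" unfolding KK_def mem_Collect_eq by (intro conjI allI ballI yent yrow ycol)
    have "obj y = obj x + eps * (\<Sum>g'\<in>F. \<Sum>w\<in>U. D' g' w)"
      by (simp add: obj_def y_def sum.distrib sum_distrib_left)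
    also have "(\<Sum>g'\<in>F. \<Sum>w\<in>U. D' g' w) = 1"
      using s4 f0 finF by simp
    finally have "obj y > obj x" using epos by simp
    thus False using xmax yK by force
  qed
  define SV where "SV = {u \<in> U. \<exists>f. good f \<and> u \<in> pth f}"
  define Y where "Y = U - SV"
  have SVU: "SV \<subseteq> U" unfolding SV_def by auto
  have UY: "U - Y = SV" unfolding Y_def using SVU by auto
  have A: "(\<Sum>w\<in>U. x f w) = rate f" if "f \<in> F" "\<not> good f" for f
    using good_base[of f] that xrate unfolding slack_def by force
  have B: "x f w = 0" if B1: "f \<in> F" and B2: "\<not> good f" and B3: "w \<in> SV" for f w
  proof (rule ccontr)
    assume "x f w \<noteq> 0"
    hence "x f w > 0" using xnn[of f w] by auto
    moreover obtain g where "good g" "w \<in> pth g" "w \<in> U" using B3 unfolding SV_def by auto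
    ultimately have "good f" using good_step B1 by blast
    thus False using B2 by blast
  qed
  have C: "x f w = 0" if "good f" "w \<in> Y" for f w
    using that xsupp[of f w] unfolding Y_def SV_def by blast
  have Ysum: "(\<Sum>w\<in>Y. x f w) = (if good f then 0 else rate f)" if "f \<in> F" for f
  proof (cases "good f")
    case True thus ?thesis using C by simp
  next
    case False
    have "(\<Sum>w\<in>U. x f w) = (\<Sum>w\<in>U - SV. x f w) + (\<Sum>w\<in>SV. x f w)"
      using sum.subset_diff[OF SVU finU] .
    also have "(\<Sum>w\<in>SV. x f w) = 0" using B[OF that False] by simp
    finally show ?thesis using A[OF that False] False by (simp add: Y_def)
  qed
  have "obj x = (\<Sum>w\<in>U. \<Sum>f\<in>F. x f w)" unfolding obj_def by (rule sum.swap)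
  also have "\<dots> = (\<Sum>w\<in>U - SV. \<Sum>f\<in>F. x f w) + (\<Sum>w\<in>SV. \<Sum>f\<in>F. x f w)"
    using sum.subset_diff[OF SVU finU] .
  also have "(\<Sum>w\<in>SV. \<Sum>f\<in>F. x f w) = sum cap (U - Y)"
    unfolding UY by (rule sum.cong) (auto simp: SV_def intro: sat)
  also have "(\<Sum>w\<in>U - SV. \<Sum>f\<in>F. x f w) = (\<Sum>f\<in>F. \<Sum>w\<in>Y. x f w)"
    unfolding Y_def by (rule sum.swap)
  also have "\<dots> = (\<Sum>f\<in>F. if good f then 0 else rate f)"
    using Ysum by simp
  finally have eq: "obj x = (\<Sum>f\<in>F. if good f then 0 else rate f) + sum cap (U - Y)" .
  have "hcov F rate pth Y \<le> (\<Sum>f\<in>F. if good f then 0 else rate f)"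
    unfolding hcov_def
  proof (rule sum_mono)
    fix f assume fF: "f \<in> F"
    show "(if pth f \<inter> Y = {} then 0 else rate f) \<le> (if good f then 0 else rate f)"
    proof (cases "pth f \<inter> Y = {}")
      case True thus ?thesis using rpos fF by (auto simp: less_imp_le)
    next
      case False
      then obtain w where "w \<in> pth f" "w \<in> Y" by auto
      hence "\<not> good f" unfolding Y_def SV_def by auto
      thus ?thesis using False by simp
    qed
  qed
  hence "hcov F rate pth Y + sum cap (U - Y) \<le> obj x" using eq by simp
  moreover have "Y \<subseteq> U" unfolding Y_def by auto
  ultimately show ?thesis using xK unfolding obj_def by blast
qed


lemma sum_as_ind:
  assumes "finite W" "S \<subseteq> W"
  shows "sum (c::'a \<Rightarrow> real) S = (\<Sum>w\<in>W. if w \<in> S then c w else 0)"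
proof -
  have "W \<inter> S = S" using assms(2) by auto
  thus ?thesis using sum.inter_restrict[OF assms(1), of c S] by simp
qed

lemma cap_ineq:
  fixes cap :: "'v \<Rightarrow> real"
  assumes W: "finite W" "A \<subseteq> W" "B \<subseteq> W" and Y: "Y1 \<subseteq> A" "Y2 \<subseteq> B" and c: "\<forall>w\<in>W. cap w \<ge> 0"
  shows "sum cap ((A \<union> B) - (Y1 \<union> Y2)) + sum cap ((A \<inter> B) - (Y1 \<inter> Y2)) \<le> sum cap (A - Y1) + sum cap (B - Y2)"
proof -
  have e1: "sum cap ((A \<union> B) - (Y1 \<union> Y2)) = (\<Sum>w\<in>W. if w \<in> (A \<union> B) - (Y1 \<union> Y2) then cap w else 0)"
    by (rule sum_as_ind) (use W in auto)
  have e2: "sum cap ((A \<inter> B) - (Y1 \<inter> Y2)) = (\<Sum>w\<in>W. if w \<in> (A \<inter> B) - (Y1 \<inter> Y2) then cap w else 0)"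
    by (rule sum_as_ind) (use W in auto)
  have e3: "sum cap (A - Y1) = (\<Sum>w\<in>W. if w \<in> A - Y1 then cap w else 0)"
    by (rule sum_as_ind) (use W in auto)
  have e4: "sum cap (B - Y2) = (\<Sum>w\<in>W. if w \<in> B - Y2 then cap w else 0)"
    by (rule sum_as_ind) (use W in auto)
  show ?thesis unfolding e1 e2 e3 e4 sum.distrib[symmetric]
    by (rule sum_mono) (use Y c in auto)
qed

lemma hcov_submod:
  assumes "\<forall>f\<in>F. rate f \<ge> 0"
  shows "hcov F rate pth (Y1 \<union> Y2) + hcov F rate pth (Y1 \<inter> Y2) \<le> hcov F rate pth Y1 + hcov F rate pth Y2"
  unfolding hcov_def sum.distrib[symmetric] by (rule sum_mono) (use assms in auto)

lemma hcov_mono: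
  assumes "\<forall>f\<in>F. rate f \<ge> 0" "Y1 \<subseteq> Y2"
  shows "hcov F rate pth Y1 \<le> hcov F rate pth Y2"
  unfolding hcov_def by (rule sum_mono) (use assms in auto)

lemma weak_dual:
  fixes x :: "'f \<Rightarrow> 'v \<Rightarrow> real"
  assumes finU: "finite U" and finF: "finite F" and UV: "U \<subseteq> V"
    and feas: "feasible3 V F rate cap U x" and YU: "Y \<subseteq> U"
  shows "objective3 F pth U x \<le> hcov F rate pth Y + sum cap (U - Y)"
proof -
  have nn: "x f v \<ge> 0" if "f \<in> F" "v \<in> U" for f v using feas UV that unfolding feasible3_def by blast
  have xcap: "\<forall>v\<in>U. (\<Sum>f\<in>F. x f v) \<le> cap v" and xrate: "\<forall>f\<in>F. (\<Sum>v\<in>U. x f v) \<le> rate f"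
    using feas unfolding feasible3_def by blast+
  have split: "(\<Sum>v\<in>pth f \<inter> U. x f v) = (\<Sum>v\<in>pth f \<inter> (U - Y). x f v) + (\<Sum>v\<in>pth f \<inter> Y. x f v)" for f
  proof -
    have "(\<Sum>v\<in>pth f \<inter> U. x f v) = (\<Sum>v\<in>(pth f \<inter> U) - (pth f \<inter> Y). x f v) + (\<Sum>v\<in>pth f \<inter> Y. x f v)"
      by (rule sum.subset_diff) (use YU finU in auto)
    moreover have "(pth f \<inter> U) - (pth f \<inter> Y) = pth f \<inter> (U - Y)" by auto
    ultimately show ?thesis by simp
  qed
  have p1: "(\<Sum>f\<in>F. \<Sum>v\<in>pth f \<inter> Y. x f v) \<le> hcov F rate pth Y"
    unfolding hcov_def
  proof (rule sum_mono)
    fix f assume fF: "f \<in> F"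
    show "(\<Sum>v\<in>pth f \<inter> Y. x f v) \<le> (if pth f \<inter> Y = {} then 0 else rate f)"
    proof (cases "pth f \<inter> Y = {}")
      case True thus ?thesis by simp
    next
      case False
      have "(\<Sum>v\<in>pth f \<inter> Y. x f v) \<le> (\<Sum>v\<in>U. x f v)"
        by (rule sum_mono2) (use finU YU nn fF in auto)
      thus ?thesis using False xrate fF by auto
    qed
  qed
  have "(\<Sum>f\<in>F. \<Sum>v\<in>pth f \<inter> (U - Y). x f v) \<le> (\<Sum>f\<in>F. \<Sum>v\<in>U - Y. x f v)"
    by (rule sum_mono, rule sum_mono2) (use finU nn in auto)
  also have "\<dots> = (\<Sum>v\<in>U - Y. \<Sum>f\<in>F. x f v)" by (rule sum.swap)
  also have "\<dots> \<le> sum cap (U - Y)" by (rule sum_mono) (use xcap in auto)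
  finally have p2: "(\<Sum>f\<in>F. \<Sum>v\<in>pth f \<inter> (U - Y). x f v) \<le> sum cap (U - Y)" .
  have "objective3 F pth U x = (\<Sum>f\<in>F. \<Sum>v\<in>pth f \<inter> (U - Y). x f v) + (\<Sum>f\<in>F. \<Sum>v\<in>pth f \<inter> Y. x f v)"
    unfolding objective3_def split sum.distrib ..
  thus ?thesis using p1 p2 by simp
qed

lemma zero_feas:
  assumes "\<forall>f\<in>F. rate f > 0" "\<forall>v\<in>V. cap v > 0" "U \<subseteq> V"
  shows "feasible3 V F rate cap U (\<lambda>_ _. 0)"
  using assms unfolding feasible3_def by (auto simp: less_imp_le)

lemma R3_le:
  fixes V :: "'v set" and F :: "'f set"
  assumes finV: "finite V" and finF: "finite F" and rpos: "\<forall>f\<in>F. rate f > 0" and cpos: "\<forall>v\<in>V. cap v > 0"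
    and UV: "U \<subseteq> V" and YU: "Y \<subseteq> U"
  shows "R3 V F rate pth cap U \<le> hcov F rate pth Y + sum cap (U - Y)"
  unfolding R3_def
proof (rule cSup_least)
  show "{objective3 F pth U x |x. feasible3 V F rate cap U x} \<noteq> {}"
    using zero_feas[OF rpos cpos UV] by blast
next
  fix z assume "z \<in> {objective3 F pth U x |x. feasible3 V F rate cap U x}"
  then obtain x where "z = objective3 F pth U x" "feasible3 V F rate cap U x" by blast
  thus "z \<le> hcov F rate pth Y + sum cap (U - Y)"
    using weak_dual[OF finite_subset[OF UV finV] finF UV _ YU] by simp
qed

lemma R3_ge:
  fixes V :: "'v set" and F :: "'f set"
  assumes finV: "finite V" and finF: "finite F" and rpos: "\<forall>f\<in>F. rate f > 0" and cpos: "\<forall>v\<in>V. cap v > 0"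
    and UV: "U \<subseteq> V"
  shows "\<exists>Y\<subseteq>U. hcov F rate pth Y + sum cap (U - Y) \<le> R3 V F rate pth cap U"
proof -
  have finU: "finite U" using finite_subset[OF UV finV] .
  have cposU: "\<forall>v\<in>U. cap v > 0" using cpos UV by auto
  obtain x Y where xK: "x \<in> KK F rate pth cap U" and YU: "Y \<subseteq> U"
    and le: "hcov F rate pth Y + sum cap (U - Y) \<le> (\<Sum>f\<in>F. \<Sum>v\<in>U. x f v)"
    using exists_cut[OF finF finU rpos cposU, of pth] by blast
  note xK' = xK[unfolded KK_def mem_Collect_eq]
  have xent: "x f v \<in> (if f \<in> F \<and> v \<in> pth f \<inter> U then {0..rate f} else {0})" for f v
    using conjunct1[OF xK'] by blast
  have xcap: "\<forall>v\<in>U. (\<Sum>f\<in>F. x f v) \<le> cap v" using conjunct1[OF conjunct2[OF xK']] .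
  have xrate: "\<forall>f\<in>F. (\<Sum>v\<in>U. x f v) \<le> rate f" using conjunct2[OF conjunct2[OF xK']] .
  have xnn: "x f v \<ge> 0" for f v using xent[of f v] by (auto split: if_splits)
  have xz: "x f v = 0" if "\<not> (f \<in> F \<and> v \<in> pth f \<inter> U)" for f v using xent[of f v] that by (auto split: if_splits)
  have feas: "feasible3 V F rate cap U x"
    unfolding feasible3_def using xnn xcap xrate xz by auto
  have "objective3 F pth U x = (\<Sum>f\<in>F. \<Sum>v\<in>U. x f v)"
    unfolding objective3_def
  proof (rule sum.cong[OF refl])
    fix f assume fF: "f \<in> F"
    show "(\<Sum>v\<in>pth f \<inter> U. x f v) = (\<Sum>v\<in>U. x f v)"
      by (rule sum.mono_neutral_left) (use finU xz fF in auto)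
  qed
  moreover have "objective3 F pth U x \<le> R3 V F rate pth cap U"
    unfolding R3_def
  proof (rule cSup_upper)
    show "objective3 F pth U x \<in> {objective3 F pth U x |x. feasible3 V F rate cap U x}" using feas by blast
    show "bdd_above {objective3 F pth U x |x. feasible3 V F rate cap U x}"
    proof (rule bdd_aboveI)
      fix z assume "z \<in> {objective3 F pth U x |x. feasible3 V F rate cap U x}"
      then obtain y where zy: "z = objective3 F pth U y" and fy: "feasible3 V F rate cap U y" by blast
      show "z \<le> hcov F rate pth {} + sum cap (U - {})"
        using weak_dual[OF finU finF UV fy empty_subsetI] zy by simp
    qed
  qed
  ultimately show ?thesis using le YU by auto
qed

theorem lemma2:
  fixes V :: "'v set" and F :: "'f set"
    and rate :: "'f \<Rightarrow> real" and path :: "'f \<Rightarrow> 'v set" and cap :: "'v \<Rightarrow> real"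
  assumes "finite V" and "finite F"
    and "\<And>f. f \<in> F \<Longrightarrow> rate f > 0"
    and "\<And>f. f \<in> F \<Longrightarrow> path f \<subseteq> V"
    and "\<And>v. v \<in> V \<Longrightarrow> cap v > 0"
  shows "monotone_nondecr_on V (R3 V F rate path cap) \<and> submodular_on V (R3 V F rate path cap)"
proof -
  have finV: "finite V" and finF: "finite F" using assms by auto
  have rpos: "\<forall>f\<in>F. rate f > 0" and cpos: "\<forall>v\<in>V. cap v > 0" using assms by auto
  have rnn: "\<forall>f\<in>F. rate f \<ge> 0" using rpos by (auto simp: less_imp_le)
  have cnn: "\<forall>v\<in>V. cap v \<ge> 0" using cpos by (auto simp: less_imp_le)
  let ?R = "R3 V F rate path cap"
  have mono: "monotone_nondecr_on V ?R"
    unfolding monotone_nondecr_on_def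
  proof (intro allI impI)
    fix A B assume AB: "A \<subseteq> B \<and> B \<subseteq> V"
    obtain Y where YB: "Y \<subseteq> B" and le: "hcov F rate path Y + sum cap (B - Y) \<le> ?R B"
      using R3_ge[OF finV finF rpos cpos, of B path] AB by blast
    have "?R A \<le> hcov F rate path (Y \<inter> A) + sum cap (A - Y \<inter> A)"
      by (rule R3_le[OF finV finF rpos cpos]) (use AB in auto)
    also have "\<dots> \<le> hcov F rate path Y + sum cap (B - Y)"
    proof (rule add_mono)
      show "hcov F rate path (Y \<inter> A) \<le> hcov F rate path Y" by (rule hcov_mono) (use rnn in auto)
      show "sum cap (A - Y \<inter> A) \<le> sum cap (B - Y)"
        by (rule sum_mono2) (use AB finV cnn finite_subset in auto)
    qed
    finally show "?R A \<le> ?R B" using le by simp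
  qed
  have sub: "submodular_on V ?R"
    unfolding submodular_on_def
  proof (intro allI impI)
    fix V1 V2 v assume h: "V1 \<subseteq> V2 \<and> V2 \<subseteq> V \<and> v \<in> V - V2"
    hence V1: "V1 \<subseteq> V2" and V2: "V2 \<subseteq> V" and v: "v \<in> V" "v \<notin> V2" by auto
    obtain Y1 where Y1: "Y1 \<subseteq> V1 \<union> {v}" and le1: "hcov F rate path Y1 + sum cap ((V1 \<union> {v}) - Y1) \<le> ?R (V1 \<union> {v})"
      using R3_ge[OF finV finF rpos cpos, of "V1 \<union> {v}" path] V1 V2 v by blast
    obtain Y2 where Y2: "Y2 \<subseteq> V2" and le2: "hcov F rate path Y2 + sum cap (V2 - Y2) \<le> ?R V2"
      using R3_ge[OF finV finF rpos cpos, of V2 path] V2 by blast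
    have AuB: "(V1 \<union> {v}) \<union> V2 = V2 \<union> {v}" using V1 by auto
    have AiB: "(V1 \<union> {v}) \<inter> V2 = V1" using V1 v by auto
    have u1: "?R (V2 \<union> {v}) \<le> hcov F rate path (Y1 \<union> Y2) + sum cap ((V2 \<union> {v}) - (Y1 \<union> Y2))"
      by (rule R3_le[OF finV finF rpos cpos]) (use V1 V2 v Y1 Y2 in auto)
    have u2: "?R V1 \<le> hcov F rate path (Y1 \<inter> Y2) + sum cap (V1 - (Y1 \<inter> Y2))"
      by (rule R3_le[OF finV finF rpos cpos]) (use V1 V2 v Y1 Y2 in auto)
    have hs: "hcov F rate path (Y1 \<union> Y2) + hcov F rate path (Y1 \<inter> Y2) \<le> hcov F rate path Y1 + hcov F rate path Y2"
      by (rule hcov_submod[OF rnn])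
    have cs: "sum cap (((V1 \<union> {v}) \<union> V2) - (Y1 \<union> Y2)) + sum cap (((V1 \<union> {v}) \<inter> V2) - (Y1 \<inter> Y2))
        \<le> sum cap ((V1 \<union> {v}) - Y1) + sum cap (V2 - Y2)"
      by (rule cap_ineq[OF finV _ _ Y1 Y2 cnn]) (use V1 V2 v in auto)
    show "?R (V1 \<union> {v}) - ?R V1 \<ge> ?R (V2 \<union> {v}) - ?R V2"
      using le1 le2 u1 u2 hs cs unfolding AuB AiB by linarith
  qed
  show ?thesis using mono sub by blast
qed

end
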